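(* Let $H[A,B]$ be a cubic brace distinct from $\mathbb{C}_4$. Then every pair $(a,b)$ with $a\in A$ and $b\in B$ is $\lambda$-matchable. Consequently, if $H\neq\Theta$ then $\rho(H)=\beta'(H)$.
   Context: Graphs are loopless but may have parallel edges. $\Theta$ has two vertices and three parallel edges; $\mathbb{C}_4$ is the $4$-cycle with every other edge doubled. A brace is a bipartite matching covered graph with no nontrivial tight cut (a cut $C$ is tight if $|C\cap M|=1$ for every perfect matching $M$, trivial if a shore has at most one vertex). For a connected bipartite cubic graph $H[A,B]$, $a\in A$, $b\in B$, an $(a,b)$-matching is a spanning subgraph in which $a,b$ have degree $3$ and all other vertices degree $1$; $(a,b)$ is $\lambda$-matchable if one exists; $\rho(H)$ is the number of $\lambda$-matchable pairs. For a matching covered graph, $\beta'$ is $\sum (n(J)/2)^2$ over all braces $J$ of order at least $6$ in its tight cut decomposition; for a brace $H$ of order at least $6$ this is $(n(H)/2)^2$, and $\beta'(\Theta)=0$. *)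

theory Defs
  imports Main
begin

text \<open>Finite loopless multigraphs: vertex set V, edge set E, and an endpoint map
  ends assigning to every edge a set of exactly two vertices (parallel edges allowed).\<close>

definition multigraph :: "'v set \<Rightarrow> 'e set \<Rightarrow> ('e \<Rightarrow> 'v set) \<Rightarrow> bool" where
  "multigraph V E ends \<longleftrightarrow> finite V \<and> finite E \<and>
     (\<forall>e\<in>E. ends e \<subseteq> V \<and> card (ends e) = 2)"

definition sdeg :: "'e set \<Rightarrow> ('e \<Rightarrow> 'v set) \<Rightarrow> 'v \<Rightarrow> nat" where
  "sdeg F ends v = card {e\<in>F. v \<in> ends e}"

definition cubic :: "'v set \<Rightarrow> 'e set \<Rightarrow> ('e \<Rightarrow> 'v set) \<Rightarrow> bool" where
  "cubic V E ends \<longleftrightarrow> (\<forall>v\<in>V. sdeg E ends v = 3)"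

definition connected_mg :: "'v set \<Rightarrow> 'e set \<Rightarrow> ('e \<Rightarrow> 'v set) \<Rightarrow> bool" where
  "connected_mg V E ends \<longleftrightarrow> V \<noteq> {} \<and>
     (\<forall>u\<in>V. \<forall>v\<in>V. (u, v) \<in> {(x, y). \<exists>e\<in>E. ends e = {x, y}}\<^sup>*)"

definition perfect_matching :: "'v set \<Rightarrow> 'e set \<Rightarrow> ('e \<Rightarrow> 'v set) \<Rightarrow> 'e set \<Rightarrow> bool" where
  "perfect_matching V E ends M \<longleftrightarrow> M \<subseteq> E \<and> (\<forall>v\<in>V. sdeg M ends v = 1)"

definition matching_covered :: "'v set \<Rightarrow> 'e set \<Rightarrow> ('e \<Rightarrow> 'v set) \<Rightarrow> bool" where
  "matching_covered V E ends \<longleftrightarrow> connected_mg V E ends \<and> E \<noteq> {} \<and>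
     (\<forall>e\<in>E. \<exists>M. perfect_matching V E ends M \<and> e \<in> M)"

definition cut :: "'e set \<Rightarrow> ('e \<Rightarrow> 'v set) \<Rightarrow> 'v set \<Rightarrow> 'e set" where
  "cut E ends X = {e\<in>E. card (ends e \<inter> X) = 1}"

definition tight_cut :: "'v set \<Rightarrow> 'e set \<Rightarrow> ('e \<Rightarrow> 'v set) \<Rightarrow> 'v set \<Rightarrow> bool" where
  "tight_cut V E ends X \<longleftrightarrow> X \<subseteq> V \<and>
     (\<forall>M. perfect_matching V E ends M \<longrightarrow> card (cut E ends X \<inter> M) = 1)"

definition nontrivial_shore :: "'v set \<Rightarrow> 'v set \<Rightarrow> bool" where
  "nontrivial_shore V X \<longleftrightarrow> card X \<ge> 2 \<and> card (V - X) \<ge> 2"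

definition bipartite_parts :: "'v set \<Rightarrow> 'e set \<Rightarrow> ('e \<Rightarrow> 'v set) \<Rightarrow> 'v set \<Rightarrow> 'v set \<Rightarrow> bool" where
  "bipartite_parts V E ends A B \<longleftrightarrow> A \<union> B = V \<and> A \<inter> B = {} \<and>
     (\<forall>e\<in>E. card (ends e \<inter> A) = 1 \<and> card (ends e \<inter> B) = 1)"

definition brace :: "'v set \<Rightarrow> 'e set \<Rightarrow> ('e \<Rightarrow> 'v set) \<Rightarrow> 'v set \<Rightarrow> 'v set \<Rightarrow> bool" where
  "brace V E ends A B \<longleftrightarrow> bipartite_parts V E ends A B \<and> matching_covered V E ends \<and>
     \<not> (\<exists>X. tight_cut V E ends X \<and> nontrivial_shore V X)"

definition ab_matching :: "'v set \<Rightarrow> 'e set \<Rightarrow> ('e \<Rightarrow> 'v set) \<Rightarrow> 'v \<Rightarrow> 'v \<Rightarrow> 'e set \<Rightarrow> bool" where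
  "ab_matching V E ends a b F \<longleftrightarrow> F \<subseteq> E \<and> sdeg F ends a = 3 \<and> sdeg F ends b = 3 \<and>
     (\<forall>v\<in>V - {a, b}. sdeg F ends v = 1)"

definition lambda_matchable :: "'v set \<Rightarrow> 'e set \<Rightarrow> ('e \<Rightarrow> 'v set) \<Rightarrow> 'v \<Rightarrow> 'v \<Rightarrow> bool" where
  "lambda_matchable V E ends a b \<longleftrightarrow> (\<exists>F. ab_matching V E ends a b F)"

definition rho :: "'v set \<Rightarrow> 'e set \<Rightarrow> ('e \<Rightarrow> 'v set) \<Rightarrow> 'v set \<Rightarrow> 'v set \<Rightarrow> nat" where
  "rho V E ends A B = card {(a, b). a \<in> A \<and> b \<in> B \<and> lambda_matchable V E ends a b}"

text \<open>beta' of a brace: its tight cut decomposition is itself, so beta' is (n/2)^2 if n \<ge> 6 and 0 otherwise.\<close>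
definition beta'_brace :: "'v set \<Rightarrow> nat" where
  "beta'_brace V = (if card V \<ge> 6 then (card V div 2)^2 else 0)"

definition mg_iso :: "'v set \<Rightarrow> 'e set \<Rightarrow> ('e \<Rightarrow> 'v set) \<Rightarrow> 'w set \<Rightarrow> 'f set \<Rightarrow> ('f \<Rightarrow> 'w set) \<Rightarrow> bool" where
  "mg_iso V E ends V' E' ends' \<longleftrightarrow> (\<exists>f g. bij_betw f V V' \<and> bij_betw g E E' \<and>
     (\<forall>e\<in>E. ends' (g e) = f ` ends e))"

definition Theta_V :: "nat set" where "Theta_V = {0, 1}"
definition Theta_E :: "nat set" where "Theta_E = {0, 1, 2}"
definition Theta_ends :: "nat \<Rightarrow> nat set" where "Theta_ends e = {0, 1}"

text \<open>C4: the 4-cycle 0-1-2-3-0 with edges 01 and 23 doubled.\<close>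
definition C4_V :: "nat set" where "C4_V = {0, 1, 2, 3}"
definition C4_E :: "nat set" where "C4_E = {0, 1, 2, 3, 4, 5}"
definition C4_ends :: "nat \<Rightarrow> nat set" where
  "C4_ends e = (if e \<le> 1 then {0, 1} else if e = 2 then {1, 2}
                else if e \<le> 4 then {2, 3} else {3, 0})"

end

theory Submission
  imports Defs
begin


lemma hall:
  fixes R :: "('a \<times> 'b) set"
  assumes "finite X" "finite (R `` X)" "\<forall>S\<subseteq>X. card S \<le> card (R `` S)"
  shows "\<exists>f. inj_on f X \<and> (\<forall>x\<in>X. (x, f x) \<in> R)"
  using assms
proof (induction "card X" arbitrary: X R rule: less_induct)
  case less
  show ?case
  proof (cases "X = {}")
    case True thus ?thesis by auto
  next
    case False
    show ?thesis
    proof (cases "\<exists>S. S \<subseteq> X \<and> S \<noteq> {} \<and> S \<noteq> X \<and> card (R``S) \<le> card S")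
      case True
      then obtain S where S: "S \<subseteq> X" "S \<noteq> {}" "S \<noteq> X" "card (R``S) \<le> card S" by blast
      have fS: "finite S" using S less by (meson finite_subset)
      have lt: "card S < card X" using S less psubset_card_mono by blast
      have fRS: "finite (R``S)" using less S by (meson Image_mono finite_subset order_refl)
      obtain f1 where f1: "inj_on f1 S" "\<forall>x\<in>S. (x, f1 x) \<in> R"
        using less(1)[OF lt fS fRS] less(4) S(1) by auto
      define R2 where "R2 = {(x,y). (x,y) \<in> R \<and> y \<notin> R``S}"
      have lt2: "card (X - S) < card X"
      proof -
        have "card (X - S) = card X - card S" using S fS by (simp add: card_Diff_subset)
        moreover have "0 < card S" using S fS by (simp add: card_gt_0_iff)
        moreover have "card S \<le> card X" using S less by (simp add: card_mono)
        ultimately show ?thesis by linarith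
      qed
      have fX2: "finite (X - S)" using less by auto
      have fR2: "finite (R2 `` (X - S))" 
        by (rule finite_subset[OF _ less(3)]) (auto simp: R2_def)
      have H2: "\<forall>T\<subseteq>X - S. card T \<le> card (R2 `` T)"
      proof (intro allI impI)
        fix T assume T: "T \<subseteq> X - S"
        have fT: "finite T" using T fX2 finite_subset by blast
        have e: "R2 `` T = (R``T \<union> R``S) - R``S" by (auto simp: R2_def)
        have fU: "finite (R``T \<union> R``S)" 
          by (rule finite_subset[OF _ less(3)]) (use T S in auto)
        have c1: "card (R2 `` T) = card (R``T \<union> R``S) - card (R``S)"
          unfolding e by (rule card_Diff_subset) (use fRS in auto)
        have "card (T \<union> S) \<le> card (R``(T \<union> S))" using less(4) T S by (meson Diff_subset Un_least subset_trans)
        moreover have "card (T \<union> S) = card T + card S" using T fT fS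
          by (intro card_Un_disjoint) auto
        moreover have "card (R``(T \<union> S)) = card (R``T \<union> R``S)" by (simp add: Image_Un)
        ultimately show "card T \<le> card (R2 `` T)" using c1 S(4) by linarith
      qed
      obtain f2 where f2: "inj_on f2 (X - S)" "\<forall>x\<in>X - S. (x, f2 x) \<in> R2"
        using less(1)[OF lt2 fX2 fR2 H2] by blast
      define f where "f x = (if x \<in> S then f1 x else f2 x)" for x
      have fS1: "f z = f1 z" if "z \<in> S" for z using that by (simp add: f_def)
      have fS2: "f z = f2 z" if "z \<notin> S" for z using that by (simp add: f_def)
      have v1: "f z \<in> R``S" if "z \<in> S" for z using that f1(2) fS1[OF that] by (metis ImageI)
      have v2: "f z \<notin> R``S" if "z \<in> X" "z \<notin> S" for z
      proof -
        have "(z, f2 z) \<in> R2" using that f2(2) by blast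
        thus ?thesis using that fS2 unfolding R2_def by simp
      qed
      have "inj_on f X"
        unfolding inj_on_def
      proof (intro ballI impI)
        fix x y assume xy: "x \<in> X" "y \<in> X" "f x = f y"
        show "x = y"
        proof (cases "x \<in> S"; cases "y \<in> S")
          assume a: "x \<in> S" "y \<in> S" 
          hence "f1 x = f1 y" using xy(3) fS1[of x] fS1[of y] by simp
          thus ?thesis using a f1(1) by (meson inj_onD)
        next
          assume a: "x \<notin> S" "y \<notin> S" 
          hence "f2 x = f2 y" using xy(3) fS2[of x] fS2[of y] by simp
          thus ?thesis using a xy f2(1) by (meson inj_onD DiffI)
        next
          assume a: "x \<in> S" "y \<notin> S"
          have "f x \<in> R``S" using v1 a(1) .
          moreover have "f y \<notin> R``S" using v2 a(2) xy(2) by blast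
          ultimately show ?thesis using xy(3) by simp
        next
          assume a: "x \<notin> S" "y \<in> S"
          have "f y \<in> R``S" using v1 a(2) .
          moreover have "f x \<notin> R``S" using v2 a(1) xy(1) by blast
          ultimately show ?thesis using xy(3) by simp
        qed
      qed
      moreover have "\<forall>x\<in>X. (x, f x) \<in> R" using f1 f2 by (auto simp: f_def R2_def)
      ultimately show ?thesis by blast
    next
      case False
      have big: "card S < card (R``S)" if "S \<subseteq> X" "S \<noteq> {}" "S \<noteq> X" for S
        using False that not_le by blast
      obtain x where x: "x \<in> X" using \<open>X \<noteq> {}\<close> by blast
      have "card {x} \<le> card (R``{x})" using less(4) x by (meson empty_subsetI insert_subset)
      hence "R``{x} \<noteq> {}" by auto
      then obtain y where y: "(x,y) \<in> R" by auto
      define R2 where "R2 = {(u,v). (u,v) \<in> R \<and> v \<noteq> y}"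
      have lt2: "card (X - {x}) < card X" using x less(2) by (rule card_Diff1_less[rotated])
      have fX2: "finite (X - {x})" using less by auto
      have fR2: "finite (R2 `` (X - {x}))" 
        by (rule finite_subset[OF _ less(3)]) (auto simp: R2_def)
      have H2: "\<forall>T\<subseteq>X - {x}. card T \<le> card (R2 `` T)"
      proof (intro allI impI)
        fix T assume T: "T \<subseteq> X - {x}"
        show "card T \<le> card (R2 `` T)"
        proof (cases "T = {}")
          case True thus ?thesis by simp
        next
          case False
          have "card T < card (R``T)" using big[of T] T False x by auto
          moreover have "card (R2 `` T) = card (R``T - {y})" by (rule arg_cong[where f=card]) (auto simp: R2_def)
          moreover have "card (R``T) - 1 \<le> card (R``T - {y})"
            by (simp add: card_Diff_singleton_if)
          ultimately show ?thesis by linarith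
        qed
      qed
      obtain f2 where f2: "inj_on f2 (X - {x})" "\<forall>u\<in>X - {x}. (u, f2 u) \<in> R2"
        using less(1)[OF lt2 fX2 fR2 H2] by blast
      define f where "f = f2(x := y)"
      have ny: "f2 u \<noteq> y" if "u \<in> X - {x}" for u using f2(2) that by (auto simp: R2_def)
      have "inj_on f X" unfolding inj_on_def
      proof (intro ballI impI)
        fix u w assume uw: "u \<in> X" "w \<in> X" "f u = f w"
        show "u = w"
        proof (cases "u = x"; cases "w = x")
          assume "u \<noteq> x" "w \<noteq> x" thus ?thesis using uw f2(1) unfolding f_def
            by (simp add: inj_on_def)
        next
          assume "u = x" "w \<noteq> x" thus ?thesis using uw ny[of w] unfolding f_def by simp
        next
          assume "u \<noteq> x" "w = x" thus ?thesis using uw ny[of u] unfolding f_def by simp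
        qed simp
      qed
      moreover have "\<forall>u\<in>X. (u, f u) \<in> R" using f2 y by (auto simp: f_def R2_def)
      ultimately show ?thesis by blast
    qed
  qed
qed



definition nbr :: "'e set \<Rightarrow> ('e \<Rightarrow> 'v set) \<Rightarrow> 'v set \<Rightarrow> 'v set" where
  "nbr E ends S = {v. \<exists>e\<in>E. \<exists>u\<in>S. ends e = {u, v}}"

definition dl :: "'e set \<Rightarrow> ('e \<Rightarrow> 'v set) \<Rightarrow> 'v set \<Rightarrow> 'e set" where
  "dl F ends T = {e\<in>F. ends e \<inter> T \<noteq> {}}"

lemma count_dl:
  assumes "finite F" "\<forall>e\<in>F. card (ends e \<inter> P) = 1" "T \<subseteq> P" "finite T"
    "\<forall>v\<in>T. sdeg F ends v = d"
  shows "card (dl F ends T) = d * card T"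
proof -
  have eq: "dl F ends T = (\<Union>v\<in>T. {e\<in>F. v \<in> ends e})" by (auto simp: dl_def)
  have disj: "\<forall>v\<in>T. \<forall>w\<in>T. v \<noteq> w \<longrightarrow> {e\<in>F. v \<in> ends e} \<inter> {e\<in>F. w \<in> ends e} = {}"
  proof (intro ballI impI)
    fix v w assume vw: "v \<in> T" "w \<in> T" "v \<noteq> w"
    show "{e\<in>F. v \<in> ends e} \<inter> {e\<in>F. w \<in> ends e} = {}"
    proof (rule ccontr)
      assume "{e\<in>F. v \<in> ends e} \<inter> {e\<in>F. w \<in> ends e} \<noteq> {}"
      then obtain e where e: "e \<in> F" "v \<in> ends e" "w \<in> ends e" by blast
      have c1: "card (ends e \<inter> P) = 1" using assms(2) e by blast
      hence fin: "finite (ends e \<inter> P)" by (metis card.infinite zero_neq_one)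
      have "{v, w} \<subseteq> ends e \<inter> P" using e vw assms(3) by auto
      hence "card {v, w} \<le> 1" using card_mono[OF fin] c1 by metis
      thus False using vw by simp
    qed
  qed
  have "card (dl F ends T) = (\<Sum>v\<in>T. card {e\<in>F. v \<in> ends e})"
    unfolding eq by (rule card_UN_disjoint) (use assms(1,4) disj in auto)
  also have "\<dots> = (\<Sum>v\<in>T. d)" using assms(5) by (simp add: sdeg_def)
  finally show ?thesis by simp
qed

locale cb =
  fixes V :: "'v set" and E :: "'e set" and ends :: "'e \<Rightarrow> 'v set" and A B :: "'v set"
  assumes mg: "multigraph V E ends" and cub: "cubic V E ends"
    and bip: "bipartite_parts V E ends A B" and conn: "connected_mg V E ends"
    and notight: "\<not> (\<exists>X. tight_cut V E ends X \<and> nontrivial_shore V X)"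
begin

lemma sym: "cb V E ends B A"
  using mg cub bip conn notight unfolding cb_def bipartite_parts_def by auto

lemma finV: "finite V" and finE: "finite E" using mg by (auto simp: multigraph_def)
lemma VAB: "V = A \<union> B" and disj: "A \<inter> B = {}" using bip by (auto simp: bipartite_parts_def)
lemma finA: "finite A" and finB: "finite B" using finV VAB by auto

lemma cA: "e \<in> E \<Longrightarrow> card (ends e \<inter> A) = 1" and cB: "e \<in> E \<Longrightarrow> card (ends e \<inter> B) = 1"
  using bip by (auto simp: bipartite_parts_def)

lemma ends_card: "e \<in> E \<Longrightarrow> card (ends e) = 2" and ends_V: "e \<in> E \<Longrightarrow> ends e \<subseteq> V"
  using mg by (auto simp: multigraph_def)

lemma edgeE:
  assumes "e \<in> E"
  obtains x y where "x \<in> A" "y \<in> B" "ends e = {x, y}"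
proof -
  obtain x where x: "ends e \<inter> A = {x}" using cA[OF assms] by (meson card_1_singletonE)
  obtain y where y: "ends e \<inter> B = {y}" using cB[OF assms] by (meson card_1_singletonE)
  have "ends e = (ends e \<inter> A) \<union> (ends e \<inter> B)" using ends_V[OF assms] VAB by auto
  hence "ends e = {x, y}" using x y by auto
  moreover have "x \<in> A" "y \<in> B" using x y by auto
  ultimately show ?thesis using that by blast
qed

lemma sameA: "e \<in> E \<Longrightarrow> x \<in> ends e \<Longrightarrow> y \<in> ends e \<Longrightarrow> x \<in> A \<Longrightarrow> y \<in> A \<Longrightarrow> x = y"
  by (erule edgeE) (use disj in auto)
lemma sameB: "e \<in> E \<Longrightarrow> x \<in> ends e \<Longrightarrow> y \<in> ends e \<Longrightarrow> x \<in> B \<Longrightarrow> y \<in> B \<Longrightarrow> x = y"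
  by (erule edgeE) (use disj in auto)

lemma ends_eq:
  assumes "e \<in> E" "x \<in> ends e" "y \<in> ends e" "x \<noteq> y"
  shows "ends e = {x, y}"
proof -
  have "finite (ends e)" using ends_card[OF assms(1)] by (metis card.infinite zero_neq_numeral)
  moreover have "{x,y} \<subseteq> ends e" using assms by auto
  moreover have "card {x,y} = card (ends e)" using assms ends_card by simp
  ultimately show ?thesis by (metis card_subset_eq)
qed

lemma deg: "v \<in> V \<Longrightarrow> card {e\<in>E. v \<in> ends e} = 3"
  using cub by (auto simp: cubic_def sdeg_def)

lemma nbr_sub: "S \<subseteq> A \<Longrightarrow> nbr E ends S \<subseteq> B"
proof
  fix v assume S: "S \<subseteq> A" and v: "v \<in> nbr E ends S"
  then obtain e u where e: "e \<in> E" "u \<in> S" "ends e = {u, v}" by (auto simp: nbr_def)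
  obtain x y where "x \<in> A" "y \<in> B" "ends e = {x, y}" using edgeE[OF e(1)] by blast
  thus "v \<in> B" using e S disj by (auto simp: doubleton_eq_iff)
qed

lemma nbr_sym: "x \<in> nbr E ends {y} \<longleftrightarrow> y \<in> nbr E ends {x}"
  by (auto simp: nbr_def insert_commute)

lemma dl_sub: "S \<subseteq> A \<Longrightarrow> F \<subseteq> E \<Longrightarrow> dl F ends S \<subseteq> dl F ends (nbr E ends S)"
proof
  fix e assume S: "S \<subseteq> A" and F: "F \<subseteq> E" and e: "e \<in> dl F ends S"
  then obtain u where u: "u \<in> S" "u \<in> ends e" "e \<in> F" by (auto simp: dl_def)
  obtain x y where xy: "x \<in> A" "y \<in> B" "ends e = {x, y}" using edgeE u F by blast
  have "u = x" using u xy S disj by auto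
  hence "y \<in> nbr E ends S" using u xy F by (auto simp: nbr_def)
  thus "e \<in> dl F ends (nbr E ends S)" using xy u by (auto simp: dl_def)
qed

lemma cnt3A: assumes "S \<subseteq> A" shows "card (dl E ends S) = 3 * card S"
proof (rule count_dl[where P=A])
  show "finite S" using assms finA by (rule finite_subset)
  show "\<forall>v\<in>S. sdeg E ends v = 3" using assms deg VAB unfolding sdeg_def by blast
qed (use finE cA assms in auto)
lemma cnt3B: assumes "S \<subseteq> B" shows "card (dl E ends S) = 3 * card S"
proof (rule count_dl[where P=B])
  show "finite S" using assms finB by (rule finite_subset)
  show "\<forall>v\<in>S. sdeg E ends v = 3" using assms deg VAB unfolding sdeg_def by blast
qed (use finE cB assms in auto)

lemma cardAB: "card A = card B"
proof -
  have "dl E ends A = E" "dl E ends B = E" using cA cB by (fastforce simp: dl_def)+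
  thus ?thesis using cnt3A[of A] cnt3B[of B] by simp
qed

lemma nbr_ge: "S \<subseteq> A \<Longrightarrow> card S \<le> card (nbr E ends S)"
proof -
  assume S: "S \<subseteq> A"
  have "card (dl E ends S) \<le> card (dl E ends (nbr E ends S))"
    by (rule card_mono) (use finE dl_sub[OF S] in \<open>auto simp: dl_def\<close>)
  thus ?thesis using cnt3A[OF S] cnt3B[OF nbr_sub[OF S]] by simp
qed

lemma closed:
  assumes S: "S \<subseteq> A" "S \<noteq> {}" "card (nbr E ends S) \<le> card S"
  shows "S = A"
proof -
  let ?N = "nbr E ends S"
  have NB: "?N \<subseteq> B" using nbr_sub[OF S(1)] .
  have sub: "dl E ends S \<subseteq> dl E ends ?N" using dl_sub[OF S(1)] by simp
  have "card (dl E ends ?N) \<le> card (dl E ends S)" using cnt3A[OF S(1)] cnt3B[OF NB] S(3) by simp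
  moreover have fN: "finite (dl E ends ?N)" using finE unfolding dl_def by simp
  ultimately have deq: "dl E ends S = dl E ends ?N" using card_seteq[OF _ sub] by blast
  define X where "X = S \<union> ?N"
  have stepX: "v \<in> X" if uX: "u \<in> X" and uv: "(u, v) \<in> {(x, y). \<exists>e\<in>E. ends e = {x, y}}" for u v
  proof -
    obtain e where e: "e \<in> E" "ends e = {u, v}" using uv by auto
    obtain x y where xy: "x \<in> A" "y \<in> B" "ends e = {x, y}" using edgeE[OF e(1)] by blast
    have yN: "y \<in> ?N" if "x \<in> S" unfolding nbr_def using that e(1) xy(3) by blast
    have xS: "x \<in> S" if "y \<in> ?N"
    proof -
      have "e \<in> dl E ends S" using deq e xy that by (auto simp: dl_def)
      then obtain w where "w \<in> S" "w \<in> ends e" by (auto simp: dl_def)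
      thus ?thesis using xy S disj by auto
    qed
    have "x \<in> X \<and> y \<in> X"
    proof (cases "x \<in> S")
      case True thus ?thesis using yN X_def by auto
    next
      case False
      have "u \<in> S \<or> u \<in> ?N" using uX X_def by auto
      moreover have "u = x \<or> u = y" using e xy by auto
      ultimately have "y \<in> ?N" using False NB disj S xy by auto
      thus ?thesis using xS X_def by auto
    qed
    thus ?thesis using e xy by auto
  qed
  obtain s where s: "s \<in> S" using S by auto
  have sV: "s \<in> V" using s S VAB by auto
  have "A \<subseteq> X"
  proof
    fix v assume v: "v \<in> A"
    hence "(s, v) \<in> {(x, y). \<exists>e\<in>E. ends e = {x, y}}\<^sup>*" using conn sV VAB
      by (auto simp: connected_mg_def)
    thus "v \<in> X"
    proof (induction rule: rtrancl_induct)
      case base thus ?case using s X_def by auto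
    next
      case (step y z) thus ?case using stepX by blast
    qed
  qed
  thus ?thesis using X_def NB disj S by auto
qed

end


lemma card_pair_int: "x \<noteq> y \<Longrightarrow> card ({x,y} \<inter> X) = 1 \<longleftrightarrow> ((x \<in> X) \<noteq> (y \<in> X))"
  by (cases "x \<in> X"; cases "y \<in> X") auto

context cb
begin

lemma tight:
  assumes S: "S \<subseteq> A" and c: "card (nbr E ends S) = card S + 1"
  shows "tight_cut V E ends (S \<union> nbr E ends S)"
  unfolding tight_cut_def
proof (intro conjI allI impI)
  let ?N = "nbr E ends S"
  have NB: "?N \<subseteq> B" using nbr_sub[OF S] .
  show "S \<union> ?N \<subseteq> V" using S NB VAB by auto
  fix M assume M: "perfect_matching V E ends M"
  hence MsE: "M \<subseteq> E" and d1: "\<forall>v\<in>V. sdeg M ends v = 1" by (auto simp: perfect_matching_def)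
  have fM: "finite M" using finE MsE by (rule finite_subset[rotated])
  have fS: "finite S" using S finA by (rule finite_subset)
  have fN: "finite ?N" using NB finB by (rule finite_subset)
  have cS: "card (dl M ends S) = 1 * card S"
  proof (rule count_dl[where P=A])
    show "\<forall>v\<in>S. sdeg M ends v = 1" using d1 S VAB by blast
  qed (use fM MsE cA S fS in auto)
  have cN: "card (dl M ends ?N) = 1 * card ?N"
  proof (rule count_dl[where P=B])
    show "\<forall>v\<in>?N. sdeg M ends v = 1" using d1 NB VAB by blast
  qed (use fM MsE cB NB fN in auto)
  have sub: "dl M ends S \<subseteq> dl M ends ?N" using dl_sub[OF S MsE] .
  have eq: "cut E ends (S \<union> ?N) \<inter> M = dl M ends ?N - dl M ends S"
  proof (rule set_eqI)
    fix e
    show "e \<in> cut E ends (S \<union> ?N) \<inter> M \<longleftrightarrow> e \<in> dl M ends ?N - dl M ends S"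
    proof (cases "e \<in> M")
      case False thus ?thesis by (simp add: dl_def)
    next
      case True
      then have eE: "e \<in> E" using MsE by auto
      obtain x y where xy: "x \<in> A" "y \<in> B" "ends e = {x,y}" using edgeE[OF eE] by blast
      have xny: "x \<noteq> y" using xy disj by auto
      have xX: "x \<in> S \<union> ?N \<longleftrightarrow> x \<in> S" using xy NB disj by auto
      have yX: "y \<in> S \<union> ?N \<longleftrightarrow> y \<in> ?N" using xy S disj by auto
      have xy_imp: "x \<in> S \<Longrightarrow> y \<in> ?N" unfolding nbr_def using eE xy(3) by blast
      have inS: "e \<in> dl M ends S \<longleftrightarrow> x \<in> S" using True xy S disj by (auto simp: dl_def)
      have inN: "e \<in> dl M ends ?N \<longleftrightarrow> y \<in> ?N" using True xy NB disj by (auto simp: dl_def)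
      have "e \<in> cut E ends (S \<union> ?N) \<longleftrightarrow> card ({x,y} \<inter> (S \<union> ?N)) = 1"
        using eE xy(3) by (simp add: cut_def)
      also have "\<dots> \<longleftrightarrow> ((x \<in> S \<union> ?N) \<noteq> (y \<in> S \<union> ?N))" by (rule card_pair_int[OF xny])
      also have "\<dots> \<longleftrightarrow> ((x \<in> S) \<noteq> (y \<in> ?N))" using xX yX by simp
      finally have incut: "e \<in> cut E ends (S \<union> ?N) \<longleftrightarrow> ((x \<in> S) \<noteq> (y \<in> ?N))" .
      show ?thesis using incut inS inN True xy_imp by blast
    qed
  qed
  have "card (dl M ends ?N - dl M ends S) = card (dl M ends ?N) - card (dl M ends S)"
    by (rule card_Diff_subset[OF _ sub]) (use fM in \<open>simp add: dl_def\<close>)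
  thus "card (cut E ends (S \<union> ?N) \<inter> M) = 1" using eq cS cN c by simp
qed

lemma surplus:
  assumes S: "S \<subseteq> A" "S \<noteq> {}" "card S + 2 \<le> card A"
  shows "card S + 2 \<le> card (nbr E ends S)"
proof (rule ccontr)
  let ?N = "nbr E ends S"
  assume nc: "\<not> card S + 2 \<le> card ?N"
  have NB: "?N \<subseteq> B" using nbr_sub[OF S(1)] .
  have fS: "finite S" using S(1) finA by (rule finite_subset)
  have fN: "finite ?N" using NB finB by (rule finite_subset)
  have "card S \<le> card ?N" using nbr_ge[OF S(1)] .
  moreover have "\<not> card ?N \<le> card S"
  proof
    assume "card ?N \<le> card S"
    hence "S = A" using closed S by blast
    thus False using S(3) by simp
  qed
  ultimately have c: "card ?N = card S + 1" using nc by linarith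
  have tc: "tight_cut V E ends (S \<union> ?N)" using tight[OF S(1) c] .
  have cX: "card (S \<union> ?N) = card S + card ?N"
    by (rule card_Un_disjoint) (use fS fN S NB disj in auto)
  have cV: "card V = card A + card B"
    unfolding VAB by (rule card_Un_disjoint) (use finA finB disj in auto)
  have "card (V - (S \<union> ?N)) = card V - card (S \<union> ?N)"
    by (rule card_Diff_subset) (use fS fN S NB VAB in auto)
  moreover have "card S > 0" using fS S(2) by (simp add: card_gt_0_iff)
  ultimately have "nontrivial_shore V (S \<union> ?N)" unfolding nontrivial_shore_def
    using cX cV c cardAB S(3) by linarith
  thus False using tc notight by blast
qed

lemma nbr1_le:
  assumes a: "a \<in> A" and F: "F \<subseteq> {e\<in>E. a \<in> ends e}"
    and cov: "\<forall>v \<in> nbr E ends {a}. \<exists>e\<in>F. v \<in> ends e"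
  shows "card (nbr E ends {a}) \<le> card F"
proof -
  have fF: "finite F" by (rule finite_subset[OF F]) (use finE in simp)
  have "nbr E ends {a} \<subseteq> (\<Union>e\<in>F. ends e - {a})"
  proof
    fix v assume v: "v \<in> nbr E ends {a}"
    then obtain e0 where e0: "e0 \<in> E" "ends e0 = {a, v}" by (auto simp: nbr_def)
    have "v \<noteq> a" using ends_card[OF e0(1)] e0(2) by auto
    moreover obtain e where "e \<in> F" "v \<in> ends e" using cov v by blast
    ultimately show "v \<in> (\<Union>e\<in>F. ends e - {a})" by blast
  qed
  moreover have "finite (\<Union>e\<in>F. ends e - {a})"
  proof (rule finite_subset[of _ V])
    show "(\<Union>e\<in>F. ends e - {a}) \<subseteq> V" using F ends_V by blast
  qed (rule finV)
  ultimately have "card (nbr E ends {a}) \<le> card (\<Union>e\<in>F. ends e - {a})"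
    by (intro card_mono)
  also have "\<dots> \<le> (\<Sum>e\<in>F. card (ends e - {a}))" by (rule card_UN_le[OF fF])
  also have "\<dots> = (\<Sum>e\<in>F. 1)"
  proof (rule sum.cong[OF refl])
    fix e assume "e \<in> F"
    hence "e \<in> E" "a \<in> ends e" using F by auto
    thus "card (ends e - {a}) = 1" using ends_card by (simp add: card_Diff_singleton)
  qed
  finally show ?thesis by simp
qed

end


context cb
begin

lemma card_nbr1:
  assumes a: "a \<in> A" and k: "3 \<le> card A"
  shows "card (nbr E ends {a}) = 3"
proof -
  have "card (nbr E ends {a}) \<le> card {e\<in>E. a \<in> ends e}"
  proof (rule nbr1_le[OF a])
    show "\<forall>v\<in>nbr E ends {a}. \<exists>e\<in>{e \<in> E. a \<in> ends e}. v \<in> ends e"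
      unfolding nbr_def by auto
  qed simp
  moreover have "card {e\<in>E. a \<in> ends e} = 3" using deg a VAB by blast
  moreover have "card {a} + 2 \<le> card (nbr E ends {a})" using surplus[of "{a}"] a k by simp
  ultimately show ?thesis by simp
qed

lemma simple:
  assumes k: "3 \<le> card A" and e: "e1 \<in> E" "e2 \<in> E" "ends e1 = ends e2"
  shows "e1 = e2"
proof (rule ccontr)
  assume ne: "e1 \<noteq> e2"
  obtain x y where xy: "x \<in> A" "y \<in> B" "ends e1 = {x, y}" using edgeE[OF e(1)] by blast
  let ?F = "{e\<in>E. x \<in> ends e} - {e2}"
  have cov: "\<forall>v\<in>nbr E ends {x}. \<exists>e\<in>?F. v \<in> ends e"
  proof
    fix v assume "v \<in> nbr E ends {x}"
    then obtain e where e': "e \<in> E" "ends e = {x, v}" by (auto simp: nbr_def)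
    show "\<exists>e\<in>?F. v \<in> ends e"
    proof (cases "e = e2")
      case True
      hence "e1 \<in> ?F" "v \<in> ends e1" using e e' xy ne by auto
      thus ?thesis by blast
    next
      case False
      hence "e \<in> ?F" "v \<in> ends e" using e' by auto
      thus ?thesis by blast
    qed
  qed
  have "card (nbr E ends {x}) \<le> card ?F" by (rule nbr1_le[OF xy(1) _ cov]) auto
  moreover have "e2 \<in> {e\<in>E. x \<in> ends e}" using e xy by auto
  moreover have "card {e\<in>E. x \<in> ends e} = 3" using deg xy VAB by blast
  ultimately have "card (nbr E ends {x}) \<le> 2" by (simp add: card_Diff_singleton)
  thus False using card_nbr1[OF xy(1) k] by simp
qed

end


context cb
begin

lemma main:
  assumes k: "3 \<le> card A" and a: "a \<in> A" and b: "b \<in> B"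
  shows "lambda_matchable V E ends a b"
proof -
  interpret S: cb V E ends B A by (rule sym)
  let ?Na = "nbr E ends {a}" and ?Nb = "nbr E ends {b}"
  have kB: "3 \<le> card B" using k cardAB by simp
  have NaB: "?Na \<subseteq> B" using nbr_sub[of "{a}"] a by simp
  have NbA: "?Nb \<subseteq> A" using S.nbr_sub[of "{b}"] b by simp
  have cNa: "card ?Na = 3" using card_nbr1[OF a k] .
  have cNb: "card ?Nb = 3" using S.card_nbr1[OF b kB] .
  have fNa: "finite ?Na" using NaB finB by (rule finite_subset)
  have fNb: "finite ?Nb" using NbA finA by (rule finite_subset)
  have symab: "a \<in> ?Nb \<longleftrightarrow> b \<in> ?Na" by (rule nbr_sym)
  define A' where "A' = A - insert a ?Nb"
  define B' where "B' = B - insert b ?Na"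
  define R where "R = {(x,y). x \<in> A' \<and> y \<in> B' \<and> y \<in> nbr E ends {x}}"
  have fA': "finite A'" using finA unfolding A'_def by simp
  have fB': "finite B'" using finB unfolding B'_def by simp
  have cA': "card A' = card A - card (insert a ?Nb)"
    unfolding A'_def by (rule card_Diff_subset) (use fNb a NbA in auto)
  have cB': "card B' = card B - card (insert b ?Na)"
    unfolding B'_def by (rule card_Diff_subset) (use fNa b NaB in auto)
  have ci: "card (insert a ?Nb) = card (insert b ?Na)"
    using symab fNa fNb cNa cNb by (simp add: card_insert_if)
  have cAB': "card A' = card B'" using cA' cB' ci cardAB by simp
  have ci3: "3 \<le> card (insert a ?Nb)" using card_insert_le[of ?Nb a] cNb by simp
  have ciA: "card (insert a ?Nb) \<le> card A" by (rule card_mono[OF finA]) (use a NbA in auto)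
  have hall_cond: "\<forall>S\<subseteq>A'. card S \<le> card (R``S)"
  proof (intro allI impI)
    fix S assume S: "S \<subseteq> A'"
    have SA: "S \<subseteq> A" using S unfolding A'_def by auto
    have aS: "a \<notin> S" using S unfolding A'_def by auto
    have fS: "finite S" using S fA' by (rule finite_subset)
    have "card S \<le> card A'" using S fA' by (rule card_mono[rotated])
    hence cS: "card S + 3 \<le> card A" using cA' ci3 ciA by linarith
    let ?T = "insert a S"
    have cT: "card ?T = card S + 1" using fS aS by simp
    have sur: "card ?T + 2 \<le> card (nbr E ends ?T)"
      by (rule surplus) (use SA a cT cS in auto)
    have TB: "nbr E ends ?T \<subseteq> B" using nbr_sub[of ?T] SA a by simp
    have fT: "finite (nbr E ends ?T)" using TB finB by (rule finite_subset)
    have NaT: "?Na \<subseteq> nbr E ends ?T" unfolding nbr_def by auto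
    have sub: "nbr E ends ?T - ?Na \<subseteq> R``S"
    proof
      fix y assume y: "y \<in> nbr E ends ?T - ?Na"
      then obtain e u where eu: "e \<in> E" "u \<in> ?T" "ends e = {u, y}" unfolding nbr_def by blast
      have "u \<noteq> a"
      proof
        assume "u = a"
        hence "y \<in> ?Na" unfolding nbr_def using eu by blast
        thus False using y by blast
      qed
      hence uS: "u \<in> S" using eu by simp
      have yB: "y \<in> B" using y TB by blast
      have "y \<noteq> b"
      proof
        assume "y = b"
        hence "u \<in> ?Nb" unfolding nbr_def using eu by (auto simp: insert_commute)
        thus False using uS S unfolding A'_def by blast
      qed
      hence "y \<in> B'" using yB y unfolding B'_def by blast
      moreover have "y \<in> nbr E ends {u}" unfolding nbr_def using eu by blast
      ultimately have "(u, y) \<in> R" using uS S unfolding R_def by blast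
      thus "y \<in> R``S" using uS by blast
    qed
    have fR: "finite (R``S)" by (rule finite_subset[OF _ fB']) (auto simp: R_def)
    have "card (nbr E ends ?T - ?Na) = card (nbr E ends ?T) - card ?Na"
      by (rule card_Diff_subset[OF fNa NaT])
    moreover have "card (nbr E ends ?T - ?Na) \<le> card (R``S)" by (rule card_mono[OF fR sub])
    ultimately show "card S \<le> card (R``S)" using sur cT cNa by linarith
  qed
  have fRA: "finite (R``A')" by (rule finite_subset[OF _ fB']) (auto simp: R_def)
  obtain f where f: "inj_on f A'" "\<forall>x\<in>A'. (x, f x) \<in> R"
    using hall[OF fA' fRA hall_cond] by blast
  have fB'': "f ` A' \<subseteq> B'" using f(2) unfolding R_def by blast
  have fimg: "f ` A' = B'"
    by (rule card_subset_eq[OF fB' fB'']) (use card_image[OF f(1)] cAB' in simp)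
  have fn: "f x \<in> nbr E ends {x}" if "x \<in> A'" for x using f(2) that unfolding R_def by blast
  have A'A: "A' \<subseteq> A" and B'B: "B' \<subseteq> B" unfolding A'_def B'_def by auto
  have aA': "a \<notin> A'" and bB': "b \<notin> B'" unfolding A'_def B'_def by auto
  have NbA': "A' \<inter> ?Nb = {}" and NaB': "B' \<inter> ?Na = {}" unfolding A'_def B'_def by auto
  define M' where "M' = {e\<in>E. \<exists>x\<in>A'. ends e = {x, f x}}"
  define F where "F = {e\<in>E. a \<in> ends e} \<union> {e\<in>E. b \<in> ends e} \<union> M'"
  have Mv: "v = x \<or> v = f x" if "e \<in> M'" "v \<in> ends e" "ends e = {x, f x}" for e v x
    using that by auto
  have Me: "\<exists>x\<in>A'. ends e = {x, f x}" if "e \<in> M'" for e using that unfolding M'_def by blast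
  have edge_nbr: "w \<in> nbr E ends {u}" if "e \<in> E" "u \<in> ends e" "w \<in> ends e" "u \<noteq> w" for e u w
  proof -
    have "ends e = {u, w}" by (rule ends_eq) (use that in auto)
    thus ?thesis unfolding nbr_def using that(1) by blast
  qed
  have degF1: "sdeg F ends v = 1" if "\<exists>e0. {e\<in>F. v \<in> ends e} = {e0}" for v
    using that unfolding sdeg_def by auto
  show ?thesis unfolding lambda_matchable_def ab_matching_def
  proof (intro exI[of _ F] conjI ballI)
    show "F \<subseteq> E" by (auto simp: F_def M'_def)
    have "{e\<in>F. a \<in> ends e} = {e\<in>E. a \<in> ends e}"
    proof (rule set_eqI, rule iffI)
      fix e assume e: "e \<in> {e\<in>F. a \<in> ends e}"
      show "e \<in> {e\<in>E. a \<in> ends e}"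
      proof (cases "e \<in> M'")
        case True
        then obtain x where x: "x \<in> A'" "ends e = {x, f x}" using Me by blast
        have "a = x \<or> a = f x" using Mv[OF True _ x(2)] e by blast
        moreover have "f x \<in> B" using fB'' x(1) B'B by blast
        ultimately have False using x(1) aA' a disj by blast
        thus ?thesis ..
      qed (use e in \<open>auto simp: F_def\<close>)
    qed (auto simp: F_def)
    thus "sdeg F ends a = 3" unfolding sdeg_def using deg a VAB by simp
    have "{e\<in>F. b \<in> ends e} = {e\<in>E. b \<in> ends e}"
    proof (rule set_eqI, rule iffI)
      fix e assume e: "e \<in> {e\<in>F. b \<in> ends e}"
      show "e \<in> {e\<in>E. b \<in> ends e}"
      proof (cases "e \<in> M'")
        case True
        then obtain x where x: "x \<in> A'" "ends e = {x, f x}" using Me by blast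
        have "b = x \<or> b = f x" using Mv[OF True _ x(2)] e by blast
        moreover have "f x \<in> B'" using fB'' x(1) by blast
        ultimately have False using x(1) bB' b A'A disj by blast
        thus ?thesis ..
      qed (use e in \<open>auto simp: F_def\<close>)
    qed (auto simp: F_def)
    thus "sdeg F ends b = 3" unfolding sdeg_def using deg b VAB by simp
    fix v assume v: "v \<in> V - {a, b}"
    show "sdeg F ends v = 1"
    proof (rule degF1)
      show "\<exists>e0. {e\<in>F. v \<in> ends e} = {e0}"
      proof (cases "v \<in> A")
        case vA: True
        have va: "v \<noteq> a" using v by blast
        show ?thesis
        proof (cases "v \<in> ?Nb")
          case True
          then obtain e0 where e0: "e0 \<in> E" "ends e0 = {b, v}" unfolding nbr_def by blast
          have "{e\<in>F. v \<in> ends e} = {e0}"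
          proof (rule set_eqI, rule iffI)
            fix e assume e: "e \<in> {e\<in>F. v \<in> ends e}"
            hence eE: "e \<in> E" unfolding F_def M'_def by blast
            consider "a \<in> ends e" | "b \<in> ends e" | "e \<in> M'" using e unfolding F_def by blast
            thus "e \<in> {e0}"
            proof cases
              case 1 thus ?thesis using sameA[OF eE _ _ a vA] e va by blast
            next
              case 2
              have "b \<noteq> v" using b vA disj by blast
              hence "ends e = {b, v}" using ends_eq[OF eE 2] e by blast
              thus ?thesis using simple[OF k eE e0(1)] e0(2) by simp
            next
              case 3
              then obtain x where x: "x \<in> A'" "ends e = {x, f x}" using Me by blast
              have "v = x \<or> v = f x" using Mv[OF 3 _ x(2)] e by blast
              moreover have "f x \<in> B" using fB'' x(1) B'B by blast
              ultimately show ?thesis using x(1) True NbA' vA disj by blast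
            qed
          next
            fix e assume "e \<in> {e0}"
            thus "e \<in> {e\<in>F. v \<in> ends e}" using e0 unfolding F_def by auto
          qed
          thus ?thesis by blast
        next
          case False
          hence vA': "v \<in> A'" using vA va unfolding A'_def by blast
          obtain e0 where e0: "e0 \<in> E" "ends e0 = {v, f v}" using fn[OF vA'] unfolding nbr_def by blast
          have "{e\<in>F. v \<in> ends e} = {e0}"
          proof (rule set_eqI, rule iffI)
            fix e assume e: "e \<in> {e\<in>F. v \<in> ends e}"
            hence eE: "e \<in> E" unfolding F_def M'_def by blast
            consider "a \<in> ends e" | "b \<in> ends e" | "e \<in> M'" using e unfolding F_def by blast
            thus "e \<in> {e0}"
            proof cases
              case 1 thus ?thesis using sameA[OF eE _ _ a vA] e va by blast
            next
              case 2
              have "b \<noteq> v" using b vA disj by blast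
              hence "v \<in> ?Nb" using edge_nbr[OF eE 2] e by blast
              thus ?thesis using False by blast
            next
              case 3
              then obtain x where x: "x \<in> A'" "ends e = {x, f x}" using Me by blast
              have "v = x \<or> v = f x" using Mv[OF 3 _ x(2)] e by blast
              moreover have "f x \<in> B" using fB'' x(1) B'B by blast
              ultimately have "v = x" using vA disj by blast
              hence "ends e = ends e0" using x e0 by simp
              thus ?thesis using simple[OF k eE e0(1)] by simp
            qed
          next
            fix e assume "e \<in> {e0}"
            thus "e \<in> {e\<in>F. v \<in> ends e}" using e0 vA' unfolding F_def M'_def by auto
          qed
          thus ?thesis by blast
        qed
      next
        case vnA: False
        hence vB: "v \<in> B" using v VAB by blast
        have vb: "v \<noteq> b" using v by blast
        show ?thesis
        proof (cases "v \<in> ?Na")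
          case True
          then obtain e0 where e0: "e0 \<in> E" "ends e0 = {a, v}" unfolding nbr_def by blast
          have "{e\<in>F. v \<in> ends e} = {e0}"
          proof (rule set_eqI, rule iffI)
            fix e assume e: "e \<in> {e\<in>F. v \<in> ends e}"
            hence eE: "e \<in> E" unfolding F_def M'_def by blast
            consider "a \<in> ends e" | "b \<in> ends e" | "e \<in> M'" using e unfolding F_def by blast
            thus "e \<in> {e0}"
            proof cases
              case 1
              have "a \<noteq> v" using a vB disj by blast
              hence "ends e = {a, v}" using ends_eq[OF eE 1] e by blast
              thus ?thesis using simple[OF k eE e0(1)] e0(2) by simp
            next
              case 2 thus ?thesis using sameB[OF eE _ _ b vB] e vb by blast
            next
              case 3
              then obtain x where x: "x \<in> A'" "ends e = {x, f x}" using Me by blast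
              have "v = x \<or> v = f x" using Mv[OF 3 _ x(2)] e by blast
              moreover have "f x \<in> B'" using fB'' x(1) by blast
              ultimately show ?thesis using x(1) True NaB' vnA A'A by blast
            qed
          next
            fix e assume "e \<in> {e0}"
            thus "e \<in> {e\<in>F. v \<in> ends e}" using e0 unfolding F_def by auto
          qed
          thus ?thesis by blast
        next
          case False
          hence vB': "v \<in> B'" using vB vb unfolding B'_def by blast
          then obtain x0 where x0: "x0 \<in> A'" "v = f x0" using fimg by blast
          obtain e0 where e0: "e0 \<in> E" "ends e0 = {x0, f x0}" using fn[OF x0(1)] unfolding nbr_def by blast
          have "{e\<in>F. v \<in> ends e} = {e0}"
          proof (rule set_eqI, rule iffI)
            fix e assume e: "e \<in> {e\<in>F. v \<in> ends e}"
            hence eE: "e \<in> E" unfolding F_def M'_def by blast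
            consider "a \<in> ends e" | "b \<in> ends e" | "e \<in> M'" using e unfolding F_def by blast
            thus "e \<in> {e0}"
            proof cases
              case 1
              have "a \<noteq> v" using a vB disj by blast
              hence "v \<in> ?Na" using edge_nbr[OF eE 1] e by blast
              thus ?thesis using False by blast
            next
              case 2 thus ?thesis using sameB[OF eE _ _ b vB] e vb by blast
            next
              case 3
              then obtain x where x: "x \<in> A'" "ends e = {x, f x}" using Me by blast
              have "v = x \<or> v = f x" using Mv[OF 3 _ x(2)] e by blast
              hence "v = f x" using x(1) A'A vnA by blast
              hence "x = x0" using f(1) x(1) x0 by (metis inj_onD)
              hence "ends e = ends e0" using x e0 by simp
              thus ?thesis using simple[OF k eE e0(1)] by simp
            qed
          next
            fix e assume "e \<in> {e0}"
            thus "e \<in> {e\<in>F. v \<in> ends e}" using e0 x0 unfolding F_def M'_def by auto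
          qed
          thus ?thesis by blast
        qed
      qed
    qed
  qed
qed

end


context cb
begin

lemma deg_split:
  assumes u: "u \<in> V" and w: "w1 \<noteq> w2"
    and all: "\<forall>e\<in>E. u \<in> ends e \<longrightarrow> ends e = {u,w1} \<or> ends e = {u,w2}"
  shows "card {e\<in>E. ends e = {u,w1}} + card {e\<in>E. ends e = {u,w2}} = 3"
proof -
  have eq: "{e\<in>E. u \<in> ends e} = {e\<in>E. ends e = {u,w1}} \<union> {e\<in>E. ends e = {u,w2}}"
    using all by auto
  have dj: "{e\<in>E. ends e = {u,w1}} \<inter> {e\<in>E. ends e = {u,w2}} = {}"
    using w by (auto simp: doubleton_eq_iff)
  have "card ({e\<in>E. ends e = {u,w1}} \<union> {e\<in>E. ends e = {u,w2}})
        = card {e\<in>E. ends e = {u,w1}} + card {e\<in>E. ends e = {u,w2}}"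
    by (rule card_Un_disjoint) (use finE dj in auto)
  thus ?thesis using eq deg[OF u] by simp
qed

lemma cardE: "card E = 3 * card A"
proof -
  have "dl E ends A = E" using cA by (fastforce simp: dl_def)
  thus ?thesis using cnt3A[of A] by simp
qed

lemma Theta_case:
  assumes "card A = 1"
  shows "mg_iso V E ends Theta_V Theta_E Theta_ends" and "\<forall>a\<in>A. \<forall>b\<in>B. lambda_matchable V E ends a b"
proof -
  obtain a where a: "A = {a}" using assms by (auto simp: card_1_singleton_iff)
  obtain b where b: "B = {b}" using assms cardAB by (auto simp: card_1_singleton_iff)
  have ab: "a \<noteq> b" using a b disj by auto
  have V: "V = {a, b}" using VAB a b by auto
  have ee: "ends e = {a, b}" if "e \<in> E" for e
    using edgeE[OF that] a b by blast
  define f where "f v = (if v = a then 0 else (1::nat))" for v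
  have bf: "bij_betw f V Theta_V"
    unfolding bij_betw_def V Theta_V_def inj_on_def f_def using ab by auto
  have "card E = card Theta_E" using cardE assms by (simp add: Theta_E_def)
  moreover have "finite Theta_E" by (simp add: Theta_E_def)
  ultimately obtain g where bg: "bij_betw g E Theta_E"
    using finite_same_card_bij[OF finE] by blast
  have "\<forall>e\<in>E. Theta_ends (g e) = f ` ends e"
    using ee ab by (auto simp: Theta_ends_def f_def)
  thus "mg_iso V E ends Theta_V Theta_E Theta_ends" unfolding mg_iso_def using bf bg by blast
  show "\<forall>x\<in>A. \<forall>y\<in>B. lambda_matchable V E ends x y"
  proof (intro ballI)
    fix x y assume "x \<in> A" "y \<in> B"
    hence xy: "x = a" "y = b" using a b by auto
    have "ab_matching V E ends a b E"
      unfolding ab_matching_def sdeg_def using deg V by auto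
    thus "lambda_matchable V E ends x y" unfolding lambda_matchable_def xy by blast
  qed
qed

end


context cb
begin

lemma C4_case:
  assumes kA: "card A = 2"
  shows "mg_iso V E ends C4_V C4_E C4_ends"
proof -
  interpret S: cb V E ends B A by (rule sym)
  from kA obtain a1 a2 where A: "A = {a1,a2}" "a1 \<noteq> a2" unfolding card_2_iff by blast
  have "card B = 2" using kA cardAB by simp
  then obtain c1 c2 where B: "B = {c1,c2}" "c1 \<noteq> c2" unfolding card_2_iff by blast
  have a1A: "a1 \<in> A" using A by auto
  have nb: "\<not> card (nbr E ends {a1}) \<le> 1"
  proof
    assume "card (nbr E ends {a1}) \<le> 1"
    hence "{a1} = A" using closed[of "{a1}"] a1A by simp
    thus False using A by auto
  qed
  have a1V: "a1 \<in> V" using a1A VAB by auto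
  have edges_a1: "\<forall>e\<in>E. a1 \<in> ends e \<longrightarrow> ends e = {a1,c1} \<or> ends e = {a1,c2}"
  proof (intro ballI impI)
    fix e assume e: "e \<in> E" "a1 \<in> ends e"
    obtain x y where xy: "x \<in> A" "y \<in> B" "ends e = {x, y}" using edgeE[OF e(1)] by blast
    have "x = a1" using sameA[OF e(1) _ e(2) xy(1) a1A] xy(3) by simp
    thus "ends e = {a1,c1} \<or> ends e = {a1,c2}" using xy B by auto
  qed
  have split1: "card {e\<in>E. ends e = {a1,c1}} + card {e\<in>E. ends e = {a1,c2}} = 3"
    by (rule deg_split[OF a1V B(2) edges_a1])
  have ne: "{e\<in>E. ends e = {a1,c}} \<noteq> {}" if c: "c \<in> B" for c
  proof
    assume emp: "{e\<in>E. ends e = {a1,c}} = {}"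
    obtain c' where c': "B = {c, c'}" using B c by auto
    have "nbr E ends {a1} \<subseteq> {c'}"
    proof
      fix v assume v: "v \<in> nbr E ends {a1}"
      then obtain e where e: "e \<in> E" "ends e = {a1, v}" unfolding nbr_def by blast
      have "v \<in> B" using nbr_sub[of "{a1}"] a1A v by auto
      moreover have "v \<noteq> c" using emp e by auto
      ultimately show "v \<in> {c'}" using c' by auto
    qed
    hence "card (nbr E ends {a1}) \<le> card {c'}" by (intro card_mono) simp_all
    hence "card (nbr E ends {a1}) \<le> 1" by simp
    thus False using nb by simp
  qed
  have fin: "finite {e\<in>E. ends e = {x,y}}" for x y using finE by simp
  have p1: "card {e\<in>E. ends e = {a1,c1}} \<noteq> 0" using ne[of c1] B fin by simp
  have p2: "card {e\<in>E. ends e = {a1,c2}} \<noteq> 0" using ne[of c2] B fin by simp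
  obtain b1 b2 where bb: "B = {b1,b2}" "b1 \<noteq> b2" "card {e\<in>E. ends e = {a1,b1}} = 2"
      "card {e\<in>E. ends e = {a1,b2}} = 1"
  proof (cases "card {e\<in>E. ends e = {a1,c1}} = 2")
    case True thus ?thesis using that[of c1 c2] B split1 by simp
  next
    case False
    hence "card {e\<in>E. ends e = {a1,c2}} = 2" "card {e\<in>E. ends e = {a1,c1}} = 1"
      using split1 p1 p2 by linarith+
    thus ?thesis using that[of c2 c1] B by auto
  qed
  have b1B: "b1 \<in> B" and b2B: "b2 \<in> B" using bb by auto
  have a2A: "a2 \<in> A" using A by auto
  have dis: "a1 \<noteq> b1" "a1 \<noteq> b2" "a2 \<noteq> b1" "a2 \<noteq> b2" using a1A a2A b1B b2B disj by auto
  have edges_b: "\<forall>e\<in>E. b \<in> ends e \<longrightarrow> ends e = {b,a1} \<or> ends e = {b,a2}" if bB: "b \<in> B" for b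
  proof (intro ballI impI)
    fix e assume e: "e \<in> E" "b \<in> ends e"
    obtain x y where xy: "x \<in> A" "y \<in> B" "ends e = {x, y}" using edgeE[OF e(1)] by blast
    have "y = b" using sameB[OF e(1) _ e(2) xy(2) bB] xy(3) by simp
    thus "ends e = {b,a1} \<or> ends e = {b,a2}" using xy A by auto
  qed
  have sb: "card {e\<in>E. ends e = {a1,b}} + card {e\<in>E. ends e = {a2,b}} = 3" if bB: "b \<in> B" for b
    using deg_split[of b a1 a2] edges_b[OF bB] bB VAB A(2) by (simp add: insert_commute)
  define E11 where "E11 = {e\<in>E. ends e = {a1,b1}}"
  define E21 where "E21 = {e\<in>E. ends e = {a2,b1}}"
  define E22 where "E22 = {e\<in>E. ends e = {a2,b2}}"
  define E12 where "E12 = {e\<in>E. ends e = {a1,b2}}"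
  have c11: "card E11 = 2" and c12: "card E12 = 1" using bb unfolding E11_def E12_def by auto
  have c21: "card E21 = 1" using sb[OF b1B] bb unfolding E21_def by simp
  have c22: "card E22 = 2" using sb[OF b2B] bb unfolding E22_def by simp
  have Eun: "E = E11 \<union> E21 \<union> E22 \<union> E12"
  proof
    show "E \<subseteq> E11 \<union> E21 \<union> E22 \<union> E12"
    proof
      fix e assume e: "e \<in> E"
      obtain x y where xy: "x \<in> A" "y \<in> B" "ends e = {x, y}" using edgeE[OF e] by blast
      thus "e \<in> E11 \<union> E21 \<union> E22 \<union> E12" using A bb e unfolding E11_def E21_def E22_def E12_def
        by auto
    qed
  qed (auto simp: E11_def E21_def E22_def E12_def)
  have neq: "{a1,b1} \<noteq> {a2,b1}" "{a1,b1} \<noteq> {a2,b2}" "{a1,b1} \<noteq> {a1,b2}"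
     "{a2,b1} \<noteq> {a2,b2}" "{a2,b1} \<noteq> {a1,b2}" "{a2,b2} \<noteq> {a1,b2}"
    using A(2) bb(2) dis by (auto simp: doubleton_eq_iff)
  have fE: "finite E11" "finite E21" "finite E22" "finite E12"
    unfolding E11_def E21_def E22_def E12_def using finE by auto
  obtain g1 where g1: "bij_betw g1 E11 {0,1::nat}"
    using finite_same_card_bij[OF fE(1), of "{0,1::nat}"] c11 by auto
  obtain g2 where g2: "bij_betw g2 E21 {2::nat}"
    using finite_same_card_bij[OF fE(2), of "{2::nat}"] c21 by auto
  obtain g3 where g3: "bij_betw g3 E22 {3,4::nat}"
    using finite_same_card_bij[OF fE(3), of "{3,4::nat}"] c22 by auto
  obtain g4 where g4: "bij_betw g4 E12 {5::nat}"
    using finite_same_card_bij[OF fE(4), of "{5::nat}"] c12 by auto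
  define g where "g e = (if e \<in> E11 then g1 e else if e \<in> E21 then g2 e
                         else if e \<in> E22 then g3 e else g4 e)" for e
  have m11: "e \<in> E11 \<Longrightarrow> g e = g1 e" for e by (simp add: g_def)
  have m21: "e \<in> E21 \<Longrightarrow> g e = g2 e" for e using neq by (auto simp: g_def E11_def E21_def)
  have m22: "e \<in> E22 \<Longrightarrow> g e = g3 e" for e using neq
    by (auto simp: g_def E11_def E21_def E22_def)
  have m12: "e \<in> E12 \<Longrightarrow> g e = g4 e" for e using neq
    by (auto simp: g_def E11_def E21_def E22_def E12_def)
  have h1: "bij_betw g E11 {0,1}" using g1 bij_betw_cong[of E11 g g1] m11 by blast
  have h2: "bij_betw g E21 {2}" using g2 bij_betw_cong[of E21 g g2] m21 by blast
  have h3: "bij_betw g E22 {3,4}" using g3 bij_betw_cong[of E22 g g3] m22 by blast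
  have h4: "bij_betw g E12 {5}" using g4 bij_betw_cong[of E12 g g4] m12 by blast
  have "bij_betw g (E11 \<union> E21 \<union> E22 \<union> E12) ({0,1} \<union> {2} \<union> {3,4} \<union> {5})"
    by (intro bij_betw_combine[OF bij_betw_combine[OF bij_betw_combine[OF h1 h2] h3] h4]) auto
  moreover have "{0,1} \<union> {2} \<union> {3,4} \<union> {5} = C4_E" by (auto simp: C4_E_def)
  ultimately have bg: "bij_betw g E C4_E" using Eun by simp
  define f where "f v = (if v = a1 then 0 else if v = b1 then 1 else if v = a2 then 2 else (3::nat))" for v
  have V: "V = {a1, a2, b1, b2}" using VAB A bb by auto
  have fv: "f a1 = 0" "f b1 = 1" "f a2 = 2" "f b2 = 3"
    using A(2) bb(2) dis unfolding f_def by auto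
  have img: "f ` V = C4_V" unfolding V C4_V_def using fv by auto
  have cV4: "card V = 4" unfolding V using A(2) bb(2) dis by auto
  have "card (f ` V) = card V" unfolding img cV4 by (simp add: C4_V_def)
  hence "inj_on f V" using finV by (simp add: inj_on_iff_eq_card)
  hence bf: "bij_betw f V C4_V" using img unfolding bij_betw_def by simp
  have ends_ok: "C4_ends (g e) = f ` ends e" if e: "e \<in> E" for e
  proof -
    have "e \<in> E11 \<or> e \<in> E21 \<or> e \<in> E22 \<or> e \<in> E12" using e Eun by blast
    thus ?thesis
    proof (elim disjE)
      assume e1: "e \<in> E11"
      hence "g e \<in> {0,1}" using h1 by (meson bij_betwE)
      moreover have "ends e = {a1,b1}" using e1 by (simp add: E11_def)
      ultimately show ?thesis using fv by (auto simp: C4_ends_def)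
    next
      assume e1: "e \<in> E21"
      hence "g e \<in> {2}" using h2 by (meson bij_betwE)
      moreover have "ends e = {a2,b1}" using e1 by (simp add: E21_def)
      ultimately show ?thesis using fv by (auto simp: C4_ends_def)
    next
      assume e1: "e \<in> E22"
      hence "g e \<in> {3,4}" using h3 by (meson bij_betwE)
      moreover have "ends e = {a2,b2}" using e1 by (simp add: E22_def)
      ultimately show ?thesis using fv by (auto simp: C4_ends_def)
    next
      assume e1: "e \<in> E12"
      hence "g e \<in> {5}" using h4 by (meson bij_betwE)
      moreover have "ends e = {a1,b2}" using e1 by (simp add: E12_def)
      ultimately show ?thesis using fv by (auto simp: C4_ends_def)
    qed
  qed
  show ?thesis unfolding mg_iso_def using bf bg ends_ok by blast
qed

end


theorem proposition1p21:
  fixes V :: "'v set" and E :: "'e set" and ends :: "'e \<Rightarrow> 'v set" and A B :: "'v set"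
  assumes "multigraph V E ends"
    and "cubic V E ends"
    and "brace V E ends A B"
    and "\<not> mg_iso V E ends C4_V C4_E C4_ends"
  shows "(\<forall>a\<in>A. \<forall>b\<in>B. lambda_matchable V E ends a b) \<and>
         (\<not> mg_iso V E ends Theta_V Theta_E Theta_ends \<longrightarrow> rho V E ends A B = beta'_brace V)"
proof -
  have bip: "bipartite_parts V E ends A B" and mc: "matching_covered V E ends"
    and nt: "\<not> (\<exists>X. tight_cut V E ends X \<and> nontrivial_shore V X)"
    using assms(3) unfolding brace_def by auto
  interpret cb V E ends A B
    unfolding cb_def using assms(1,2) bip mc nt by (auto simp: matching_covered_def)
  have cV: "card V = card A + card B"
    unfolding VAB by (rule card_Un_disjoint) (use finA finB disj in auto)
  have k1: "card A \<noteq> 0"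
  proof
    assume "card A = 0"
    hence "A = {}" "B = {}" using finA finB cardAB by auto
    thus False using conn VAB by (auto simp: connected_mg_def)
  qed
  consider (one) "card A = 1" | (two) "card A = 2" | (big) "3 \<le> card A" using k1 by linarith
  thus ?thesis
  proof cases
    case one thus ?thesis using Theta_case by blast
  next
    case two thus ?thesis using C4_case assms(4) by blast
  next
    case big
    have all: "\<forall>a\<in>A. \<forall>b\<in>B. lambda_matchable V E ends a b" using main[OF big] by blast
    have "{(a, b). a \<in> A \<and> b \<in> B \<and> lambda_matchable V E ends a b} = A \<times> B" using all by auto
    hence "rho V E ends A B = card A * card B" unfolding rho_def by (simp add: card_cartesian_product)
    moreover have "beta'_brace V = card A * card A"
      unfolding beta'_brace_def using cV cardAB big by (simp add: power2_eq_square)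
    ultimately show ?thesis using all cardAB by simp
  qed
qed


end
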